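(* Fix $\beta>1$. Let $(D_n)_{n\geq1}$ be a sequence of non-empty finite sets of generalised $\beta$-digits, and suppose that both the lengths and the subdigits of all generalised digits appearing in the sets $D_n$ are bounded. Identifying each generalised digit with its value, let $\ell_n$ and $u_n$ be the least and greatest elements of $D_n$, $\Delta_n=u_n-\ell_n$, and let $\delta_n$ be the largest gap between consecutive elements of $D_n$ (with $\delta_n=0$ if $|D_n|=1$). If for every $n\geq1$ $$\delta_n\leq\sum_{i=1}^{\infty}\Delta_{n+i}\,\beta^{-i},$$ then $$\Big\{\sum_{n=1}^\infty a_n\beta^{-n} : a_n\in D_n \text{ for all } n\Big\}=\Big[\sum_{n=1}^\infty \ell_n\beta^{-n},\ \sum_{n=1}^\infty u_n\beta^{-n}\Big].$$
   Context: A generalised $\beta$-digit of length $k+1$ is a string $c_0.c_1\ldots c_k$ of non-negative integers $c_0,\dots,c_k$ (its subdigits); its value is $\sum_{i=0}^k c_i\beta^{-i}$, which depends on $\beta$. Least/greatest elements and gaps are taken with respect to these values. *)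

theory Defs
  imports Complex_Main
begin

text \<open>A generalised beta-digit c_0.c_1...c_k is a non-empty list [c_0,...,c_k] of naturals.\<close>

definition gdigit_val :: "real \<Rightarrow> nat list \<Rightarrow> real" where
  "gdigit_val \<beta> c = (\<Sum>i<length c. real (c ! i) * \<beta> powr (- real i))"

definition digit_vals :: "real \<Rightarrow> nat list set \<Rightarrow> real set" where
  "digit_vals \<beta> D = gdigit_val \<beta> ` D"

definition dmin :: "real \<Rightarrow> nat list set \<Rightarrow> real" where
  "dmin \<beta> D = Min (digit_vals \<beta> D)"

definition dmax :: "real \<Rightarrow> nat list set \<Rightarrow> real" where
  "dmax \<beta> D = Max (digit_vals \<beta> D)"

definition dspread :: "real \<Rightarrow> nat list set \<Rightarrow> real" where
  "dspread \<beta> D = dmax \<beta> D - dmin \<beta> D"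

definition dgap :: "real \<Rightarrow> nat list set \<Rightarrow> real" where
  "dgap \<beta> D = Max (insert 0 {y - x | x y. x \<in> digit_vals \<beta> D \<and> y \<in> digit_vals \<beta> D \<and> x < y \<and>
       \<not> (\<exists>z \<in> digit_vals \<beta> D. x < z \<and> z < y)})"

end

theory Submission imports Defs begin

definition tl_sum :: "real \<Rightarrow> (nat \<Rightarrow> real) \<Rightarrow> nat \<Rightarrow> real" where
  "tl_sum r f n = (\<Sum>i. f (n + Suc i) * r ^ Suc i)"

lemma tl_summable:
  fixes r B :: real and f :: "nat \<Rightarrow> real"
  assumes "0 < r" "r < 1" "\<And>k. k \<ge> 1 \<Longrightarrow> \<bar>f k\<bar> \<le> B"
  shows "summable (\<lambda>i. f (n + Suc i) * r ^ Suc i)"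
proof (rule summable_comparison_test)
  show "summable (\<lambda>i. B * r * r ^ i)"
    using assms by (intro summable_mult summable_geometric) simp
  show "\<exists>N. \<forall>i\<ge>N. norm (f (n + Suc i) * r ^ Suc i) \<le> B * r * r ^ i"
  proof (intro exI allI impI)
    fix i
    have "\<bar>f (n + Suc i)\<bar> \<le> B" using assms(3) by simp
    hence "\<bar>f (n + Suc i)\<bar> * r ^ Suc i \<le> B * r ^ Suc i"
      using assms by (intro mult_right_mono) auto
    thus "norm (f (n + Suc i) * r ^ Suc i) \<le> B * r * r ^ i"
      using assms by (simp add: abs_mult)
  qed
qed

lemma tl_split:
  fixes r B :: real and f :: "nat \<Rightarrow> real"
  assumes "0 < r" "r < 1" "\<And>k. k \<ge> 1 \<Longrightarrow> \<bar>f k\<bar> \<le> B"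
  shows "tl_sum r f n = r * (f (Suc n) + tl_sum r f (Suc n))"
proof -
  have s: "summable (\<lambda>i. f (n + Suc i) * r ^ Suc i)" by (rule tl_summable[OF assms])
  have s2: "summable (\<lambda>i. f (Suc n + Suc i) * r ^ Suc i)" by (rule tl_summable[OF assms])
  have "(\<Sum>i. f (n + Suc (Suc i)) * r ^ Suc (Suc i)) = (\<Sum>i. f (n + Suc i) * r ^ Suc i) - f (n + Suc 0) * r ^ Suc 0"
    using suminf_split_head[OF s] by simp
  moreover have "(\<Sum>i. f (n + Suc (Suc i)) * r ^ Suc (Suc i)) = r * (\<Sum>i. f (Suc n + Suc i) * r ^ Suc i)"
    using suminf_mult[OF s2, of r] by (simp add: algebra_simps)
  ultimately show ?thesis unfolding tl_sum_def by (simp add: algebra_simps)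
qed

lemma tl_bound:
  fixes r B :: real and f :: "nat \<Rightarrow> real"
  assumes "0 < r" "r < 1" "\<And>k. k \<ge> 1 \<Longrightarrow> \<bar>f k\<bar> \<le> B"
  shows "\<bar>tl_sum r f n\<bar> \<le> B * r / (1 - r)"
proof -
  have s: "summable (\<lambda>i. f (n + Suc i) * r ^ Suc i)" by (rule tl_summable[OF assms])
  have g: "summable (\<lambda>i. B * r * r ^ i)"
    using assms by (intro summable_mult summable_geometric) simp
  have gs: "(\<Sum>i. B * r * r ^ i) = B * r / (1 - r)"
    using assms suminf_mult[OF summable_geometric[of r], of "B*r"] suminf_geometric[of r]
    by simp
  have b: "\<bar>f (n + Suc i) * r ^ Suc i\<bar> \<le> B * r * r ^ i" for i
  proof -
    have "\<bar>f (n + Suc i)\<bar> \<le> B" using assms(3) by simp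
    hence "\<bar>f (n + Suc i)\<bar> * r ^ Suc i \<le> B * r ^ Suc i"
      using assms by (intro mult_right_mono) auto
    thus ?thesis using assms by (simp add: abs_mult)
  qed
  have "tl_sum r f n \<le> (\<Sum>i. B * r * r ^ i)" unfolding tl_sum_def
    using abs_le_D1[OF b] by (intro suminf_le[OF _ s g]) auto
  moreover have "(\<Sum>i. - (B * r * r ^ i)) \<le> tl_sum r f n" unfolding tl_sum_def
    using abs_le_D2[OF b] by (intro suminf_le[OF _ summable_minus[OF g] s]) (auto simp: minus_le_iff)
  hence "- (\<Sum>i. B * r * r ^ i) \<le> tl_sum r f n" using suminf_minus[OF g] by simp
  ultimately show ?thesis using gs by (simp add: abs_le_iff)
qed

lemma tl_diff:
  fixes r B :: real and f g :: "nat \<Rightarrow> real"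
  assumes "0 < r" "r < 1" "\<And>k. k \<ge> 1 \<Longrightarrow> \<bar>f k\<bar> \<le> B" "\<And>k. k \<ge> 1 \<Longrightarrow> \<bar>g k\<bar> \<le> B"
  shows "tl_sum r g n - tl_sum r f n = (\<Sum>i. (g (n + Suc i) - f (n + Suc i)) * r ^ Suc i)"
proof -
  have s1: "summable (\<lambda>i. g (n + Suc i) * r ^ Suc i)" by (rule tl_summable[OF assms(1,2,4)])
  have s2: "summable (\<lambda>i. f (n + Suc i) * r ^ Suc i)" by (rule tl_summable[OF assms(1,2,3)])
  show ?thesis unfolding tl_sum_def
    using suminf_diff[OF s1 s2] by (simp add: left_diff_distrib)
qed

lemma tl_mono:
  fixes r B :: real and f g :: "nat \<Rightarrow> real"
  assumes "0 < r" "r < 1" "\<And>k. k \<ge> 1 \<Longrightarrow> \<bar>f k\<bar> \<le> B" "\<And>k. k \<ge> 1 \<Longrightarrow> \<bar>g k\<bar> \<le> B"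
    "\<And>k. k \<ge> 1 \<Longrightarrow> f k \<le> g k"
  shows "tl_sum r f n \<le> tl_sum r g n"
  unfolding tl_sum_def
  using assms by (intro suminf_le tl_summable[OF assms(1,2,3)] tl_summable[OF assms(1,2,4)] mult_right_mono) auto

lemma digit_choice:
  fixes V :: "real set"
  assumes "finite V" "V \<noteq> {}"
    and gp: "\<And>y z. y \<in> V \<Longrightarrow> z \<in> V \<Longrightarrow> y < z \<Longrightarrow> \<not> (\<exists>w\<in>V. y < w \<and> w < z) \<Longrightarrow> z - y \<le> C - A"
    and "Min V + A \<le> x" "x \<le> Max V + C"
  shows "\<exists>d\<in>V. d + A \<le> x \<and> x \<le> d + C"
proof (rule ccontr)
  assume nn: "\<not> ?thesis"
  define W where "W = {d\<in>V. d + A \<le> x}"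
  have "Min V \<in> W" using assms Min_in[OF assms(1,2)] by (auto simp: W_def)
  hence W: "finite W" "W \<noteq> {}" using assms(1) unfolding W_def by auto
  define d where "d = Max W"
  have dW: "d \<in> W" using W by (simp add: d_def)
  have dV: "d \<in> V" "d + A \<le> x" using dW by (auto simp: W_def)
  have xd: "x > d + C" using nn dV by auto
  have "d \<noteq> Max V" using xd assms(5) by auto
  hence dlt: "d < Max V" using Max_ge[OF assms(1) dV(1)] by auto
  define U where "U = {z\<in>V. d < z}"
  have U: "finite U" "U \<noteq> {}" using assms(1) dlt Max_in[OF assms(1,2)] unfolding U_def by auto
  define e where "e = Min U"
  have eU: "e \<in> U" using U by (simp add: e_def)
  have eV: "e \<in> V" "d < e" using eU by (auto simp: U_def)
  have nb: "\<not> (\<exists>w\<in>V. d < w \<and> w < e)"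
    using U Min_le[of U] by (force simp: e_def U_def)
  have "e - d \<le> C - A" using gp[OF dV(1) eV nb] .
  hence "e + A \<le> x" using xd by linarith
  hence "e \<in> W" using eV by (simp add: W_def)
  hence "e \<le> d" using W by (simp add: d_def)
  thus False using eV by simp
qed

lemma gval_bounds:
  assumes "\<beta> > 1" "length c \<le> L" "\<forall>j\<in>set c. j \<le> M"
  shows "0 \<le> gdigit_val \<beta> c \<and> gdigit_val \<beta> c \<le> real L * real M"
proof -
  have t: "0 \<le> real (c ! i) * \<beta> powr (- real i) \<and> real (c ! i) * \<beta> powr (- real i) \<le> real M"
    if "i < length c" for i
  proof -
    have cm: "c ! i \<le> M" using assms(3) nth_mem[OF that] by blast
    have g1: "1 \<le> \<beta> powr real i" using assms(1) by (intro ge_one_powr_ge_zero) auto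
    have p: "\<beta> powr (- real i) \<le> 1" unfolding powr_minus using g1 by (simp add: inverse_le_1_iff)
    have "real (c ! i) * \<beta> powr (- real i) \<le> real (c ! i) * 1"
      by (intro mult_left_mono p) auto
    thus ?thesis using cm by simp
  qed
  have "gdigit_val \<beta> c \<le> (\<Sum>i<length c. real M)" unfolding gdigit_val_def
    using t by (intro sum_mono) auto
  also have "\<dots> = real (length c) * real M" by simp
  also have "\<dots> \<le> real L * real M" using assms(2) by (intro mult_right_mono) auto
  finally show ?thesis unfolding gdigit_val_def using t by (auto intro: sum_nonneg)
qed

theorem lemma2p2:
  fixes \<beta> :: real and D :: "nat \<Rightarrow> nat list set"
  assumes beta: "\<beta> > 1"
    and fin: "\<And>n. n \<ge> 1 \<Longrightarrow> finite (D n)"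
    and ne: "\<And>n. n \<ge> 1 \<Longrightarrow> D n \<noteq> {}"
    and digits: "\<And>n c. n \<ge> 1 \<Longrightarrow> c \<in> D n \<Longrightarrow> c \<noteq> []"
    and len_bdd: "\<exists>L. \<forall>n\<ge>1. \<forall>c\<in>D n. length c \<le> L"
    and sub_bdd: "\<exists>M. \<forall>n\<ge>1. \<forall>c\<in>D n. \<forall>j\<in>set c. j \<le> M"
    and gap: "\<And>n. n \<ge> 1 \<Longrightarrow>
      dgap \<beta> (D n) \<le> (\<Sum>i. dspread \<beta> (D (n + Suc i)) * \<beta> powr (- real (Suc i)))"
  shows "{(\<Sum>n. gdigit_val \<beta> (a (Suc n)) * \<beta> powr (- real (Suc n))) | a.
            \<forall>n\<ge>1. a n \<in> D n}
       = {(\<Sum>n. dmin \<beta> (D (Suc n)) * \<beta> powr (- real (Suc n))) ..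
          (\<Sum>n. dmax \<beta> (D (Suc n)) * \<beta> powr (- real (Suc n)))}"
proof -
  define r where "r = 1 / \<beta>"
  have r0: "0 < r" and r1: "r < 1" using beta by (auto simp: r_def)
  have br: "\<beta> * r = 1" using beta by (simp add: r_def)
  have pw: "\<beta> powr (- real k) = r ^ k" for k
    using beta by (simp add: r_def powr_minus powr_realpow power_one_over divide_inverse power_inverse)
  obtain L where L: "\<forall>n\<ge>1. \<forall>c\<in>D n. length c \<le> L" using len_bdd by blast
  obtain M where M: "\<forall>n\<ge>1. \<forall>c\<in>D n. \<forall>j\<in>set c. j \<le> M" using sub_bdd by blast
  define B where "B = real L * real M"
  let ?v = "gdigit_val \<beta>"
  have vb: "0 \<le> ?v c \<and> ?v c \<le> B" if "n \<ge> 1" "c \<in> D n" for n c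
    unfolding B_def using gval_bounds[OF beta] L M that by blast
  have vabs: "\<bar>?v c\<bar> \<le> B" if "n \<ge> 1" "c \<in> D n" for n c
    using vb[OF that] by simp
  have fv: "finite (digit_vals \<beta> (D n))" "digit_vals \<beta> (D n) \<noteq> {}" if "n \<ge> 1" for n
    using fin[OF that] ne[OF that] by (auto simp: digit_vals_def)
  define lo where "lo n = dmin \<beta> (D n)" for n
  define hi where "hi n = dmax \<beta> (D n)" for n
  have lo_in: "lo n \<in> digit_vals \<beta> (D n)" if "n \<ge> 1" for n
    unfolding lo_def dmin_def using Min_in[OF fv[OF that]] .
  have hi_in: "hi n \<in> digit_vals \<beta> (D n)" if "n \<ge> 1" for n
    unfolding hi_def dmax_def using Max_in[OF fv[OF that]] .
  have lob: "\<bar>lo n\<bar> \<le> B" if "n \<ge> 1" for n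
    using lo_in[OF that] vabs[OF that] by (auto simp: digit_vals_def)
  have hib: "\<bar>hi n\<bar> \<le> B" if "n \<ge> 1" for n
    using hi_in[OF that] vabs[OF that] by (auto simp: digit_vals_def)
  have lo_le: "lo n \<le> ?v c" if "n \<ge> 1" "c \<in> D n" for n c
    unfolding lo_def dmin_def using Min_le[OF fv(1)[OF that(1)]] that(2) by (auto simp: digit_vals_def)
  have hi_ge: "?v c \<le> hi n" if "n \<ge> 1" "c \<in> D n" for n c
    unfolding hi_def dmax_def using Max_ge[OF fv(1)[OF that(1)]] that(2) by (auto simp: digit_vals_def)
  define Tl where "Tl = tl_sum r lo"
  define Tu where "Tu = tl_sum r hi"
  have eqL: "(\<Sum>n. dmin \<beta> (D (Suc n)) * \<beta> powr (- real (Suc n))) = Tl 0"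
    unfolding pw by (simp add: Tl_def tl_sum_def lo_def)
  have eqU: "(\<Sum>n. dmax \<beta> (D (Suc n)) * \<beta> powr (- real (Suc n))) = Tu 0"
    unfolding pw by (simp add: Tu_def tl_sum_def hi_def)
  have eqA: "(\<Sum>n. ?v (a (Suc n)) * \<beta> powr (- real (Suc n))) = tl_sum r (\<lambda>k. ?v (a k)) 0" for a
    unfolding pw by (simp add: tl_sum_def)
  have K: "\<bar>Tl n\<bar> \<le> B * r / (1 - r)" "\<bar>Tu n\<bar> \<le> B * r / (1 - r)" for n
    unfolding Tl_def Tu_def using tl_bound[OF r0 r1 lob] tl_bound[OF r0 r1 hib] by auto
  have sub1: "Tl 0 \<le> tl_sum r (\<lambda>k. ?v (a k)) 0 \<and> tl_sum r (\<lambda>k. ?v (a k)) 0 \<le> Tu 0"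
    if a: "\<forall>n\<ge>1. a n \<in> D n" for a
  proof -
    have ab: "\<bar>?v (a k)\<bar> \<le> B" if "k \<ge> 1" for k using vabs[OF that] a that by blast
    show ?thesis unfolding Tl_def Tu_def
      using tl_mono[OF r0 r1 lob ab] tl_mono[OF r0 r1 ab hib] lo_le hi_ge a by auto
  qed
  have choose: "\<exists>c\<in>D (Suc n). Tl (Suc n) \<le> \<beta> * y - ?v c \<and> \<beta> * y - ?v c \<le> Tu (Suc n)"
    if y: "Tl n \<le> y" "y \<le> Tu n" for n y
  proof -
    let ?V = "digit_vals \<beta> (D (Suc n))"
    have s1: "Tl n = r * (lo (Suc n) + Tl (Suc n))" unfolding Tl_def by (rule tl_split[OF r0 r1 lob])
    have s2: "Tu n = r * (hi (Suc n) + Tu (Suc n))" unfolding Tu_def by (rule tl_split[OF r0 r1 hib])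
    have m1: "Min ?V + Tl (Suc n) \<le> \<beta> * y"
    proof -
      have "\<beta> * Tl n \<le> \<beta> * y" using y beta by simp
      moreover have "\<beta> * Tl n = (\<beta> * r) * (lo (Suc n) + Tl (Suc n))" using s1 by simp
      hence "\<beta> * Tl n = lo (Suc n) + Tl (Suc n)" using br by simp
      ultimately show ?thesis by (simp add: lo_def dmin_def)
    qed
    have m2: "\<beta> * y \<le> Max ?V + Tu (Suc n)"
    proof -
      have "\<beta> * y \<le> \<beta> * Tu n" using y beta by simp
      moreover have "\<beta> * Tu n = (\<beta> * r) * (hi (Suc n) + Tu (Suc n))" using s2 by simp
      hence "\<beta> * Tu n = hi (Suc n) + Tu (Suc n)" using br by simp
      ultimately show ?thesis by (simp add: hi_def dmax_def)
    qed
    have gp: "z - w \<le> Tu (Suc n) - Tl (Suc n)"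
      if "w \<in> ?V" "z \<in> ?V" "w < z" "\<not> (\<exists>t\<in>?V. w < t \<and> t < z)" for w z
    proof -
      let ?S = "{y - x | x y. x \<in> ?V \<and> y \<in> ?V \<and> x < y \<and> \<not> (\<exists>z \<in> ?V. x < z \<and> z < y)}"
      have "?S \<subseteq> (\<lambda>(x, y). y - x) ` (?V \<times> ?V)" by auto
      moreover have "finite ((\<lambda>(x, y). y - x) ` (?V \<times> ?V))" using fv(1)[of "Suc n"] by simp
      ultimately have "finite ?S" by (rule finite_subset)
      hence fS: "finite (insert 0 ?S)" by simp
      have "z - w \<in> insert 0 ?S" using that by blast
      hence "z - w \<le> dgap \<beta> (D (Suc n))" unfolding dgap_def using fS by (intro Max_ge)
      also have "\<dots> \<le> (\<Sum>i. dspread \<beta> (D (Suc n + Suc i)) * \<beta> powr (- real (Suc i)))"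
        using gap[of "Suc n"] by simp
      also have "\<dots> = (\<Sum>i. (hi (Suc n + Suc i) - lo (Suc n + Suc i)) * r ^ Suc i)"
        unfolding pw by (simp add: dspread_def hi_def lo_def)
      also have "\<dots> = Tu (Suc n) - Tl (Suc n)"
        unfolding Tu_def Tl_def using tl_diff[OF r0 r1 lob hib] by simp
      finally show ?thesis .
    qed
    obtain d where d: "d \<in> ?V" "d + Tl (Suc n) \<le> \<beta> * y" "\<beta> * y \<le> d + Tu (Suc n)"
      using digit_choice[OF fv[of "Suc n"] _ m1 m2] gp by auto
    then obtain c where "c \<in> D (Suc n)" "d = ?v c" by (auto simp: digit_vals_def)
    thus ?thesis using d by (intro bexI[of _ c]) auto
  qed
  have sub2: "\<exists>a. (\<forall>n\<ge>1. a n \<in> D n) \<and> x = tl_sum r (\<lambda>k. ?v (a k)) 0"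
    if x: "Tl 0 \<le> x" "x \<le> Tu 0" for x
  proof -
    define step where "step n y = (SOME c. c \<in> D (Suc n) \<and> Tl (Suc n) \<le> \<beta> * y - ?v c \<and> \<beta> * y - ?v c \<le> Tu (Suc n))" for n y
    have step: "step n y \<in> D (Suc n) \<and> Tl (Suc n) \<le> \<beta> * y - ?v (step n y) \<and> \<beta> * y - ?v (step n y) \<le> Tu (Suc n)"
      if "Tl n \<le> y" "y \<le> Tu n" for n y
      unfolding step_def using someI_ex[OF choose[OF that, unfolded Bex_def]] .
    define xs where "xs = rec_nat x (\<lambda>n y. \<beta> * y - ?v (step n y))"
    have xs0: "xs 0 = x" and xsS: "xs (Suc n) = \<beta> * xs n - ?v (step n (xs n))" for n
      by (simp_all add: xs_def)
    have inv: "Tl n \<le> xs n \<and> xs n \<le> Tu n" for n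
    proof (induction n)
      case 0 thus ?case using x xs0 by simp
    next
      case (Suc n) thus ?case using step[of n "xs n"] xsS[of n] by simp
    qed
    define a where "a k = (case k of 0 \<Rightarrow> [] | Suc n \<Rightarrow> step n (xs n))" for k
    have aD: "\<forall>n\<ge>1. a n \<in> D n"
    proof (intro allI impI)
      fix n :: nat assume "n \<ge> 1"
      then obtain m where "n = Suc m" by (cases n) auto
      thus "a n \<in> D n" using step[of m "xs m"] inv[of m] by (simp add: a_def)
    qed
    have ident: "x = (\<Sum>k<N. ?v (a (Suc k)) * r ^ Suc k) + r ^ N * xs N" for N
    proof (induction N)
      case 0 thus ?case by (simp add: xs0)
    next
      case (Suc N)
      have "xs N = r * (?v (a (Suc N)) + xs (Suc N))"
        using xsS[of N] br by (simp add: a_def algebra_simps)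
      hence "r ^ N * xs N = ?v (a (Suc N)) * r ^ Suc N + r ^ Suc N * xs (Suc N)"
        by (simp add: algebra_simps)
      thus ?case using Suc by simp
    qed
    have xsb: "\<bar>xs N\<bar> \<le> B * r / (1 - r)" for N
      using inv[of N] K[of N] by linarith
    have "(\<lambda>N. r ^ N * xs N) \<longlonglongrightarrow> 0"
    proof (rule tendsto_0_le[where f="\<lambda>N. r ^ N" and K="B * r / (1 - r)"])
      show "(\<lambda>N. r ^ N) \<longlonglongrightarrow> 0" using r0 r1 by (intro LIMSEQ_power_zero) auto
      show "\<forall>\<^sub>F N in sequentially. norm (r ^ N * xs N) \<le> norm (r ^ N) * (B * r / (1 - r))"
      proof (intro always_eventually allI)
        fix N
        have "r ^ N * \<bar>xs N\<bar> \<le> r ^ N * (B * r / (1 - r))"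
          using xsb[of N] r0 by (intro mult_left_mono) auto
        thus "norm (r ^ N * xs N) \<le> norm (r ^ N) * (B * r / (1 - r))"
          using r0 by (simp add: abs_mult)
      qed
    qed
    hence "(\<lambda>N. x - r ^ N * xs N) \<longlonglongrightarrow> x - 0" by (intro tendsto_diff tendsto_const)
    moreover have "(\<lambda>N. x - r ^ N * xs N) = (\<lambda>N. \<Sum>k<N. ?v (a (Suc k)) * r ^ Suc k)"
    proof
      fix N show "x - r ^ N * xs N = (\<Sum>k<N. ?v (a (Suc k)) * r ^ Suc k)"
        using ident[of N] by linarith
    qed
    ultimately have "(\<lambda>N. \<Sum>k<N. ?v (a (Suc k)) * r ^ Suc k) \<longlonglongrightarrow> x" by simp
    hence "(\<lambda>k. ?v (a (Suc k)) * r ^ Suc k) sums x" by (simp add: sums_def)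
    hence "x = tl_sum r (\<lambda>k. ?v (a k)) 0" by (simp add: tl_sum_def sums_unique)
    thus ?thesis using aD by blast
  qed
  show ?thesis unfolding eqL eqU eqA
  proof (intro set_eqI iffI)
    fix x assume "x \<in> {tl_sum r (\<lambda>k. ?v (a k)) 0 | a. \<forall>n\<ge>1. a n \<in> D n}"
    thus "x \<in> {Tl 0 .. Tu 0}" using sub1 by auto
  next
    fix x assume "x \<in> {Tl 0 .. Tu 0}"
    thus "x \<in> {tl_sum r (\<lambda>k. ?v (a k)) 0 | a. \<forall>n\<ge>1. a n \<in> D n}" using sub2 by fastforce
  qed
qed

end
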